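(* Let $|\mathfrak{X}|\ge2$ and let $\mathbf{D}^{(1)}$ be an $(m_n,n,\mathbf{P})$ unlabeled Markov database. Define the collapsed database $\tilde{\mathbf{D}}^{(1)}$ by $\tilde D^{(1)}_{i,j}=1$ if $D^{(1)}_{i,j}=1$ and $\tilde D^{(1)}_{i,j}=2$ otherwise, and the column histograms $\tilde H^{(1)}_j=\sum_{i=1}^{m_n}\mathbb{1}[\tilde D^{(1)}_{i,j}=2]$ for $j\in[n]$. If $m_n=\omega(n^4)$, then $$\Pr\big(\exists\, i,j\in[n],\ i\neq j,\ \tilde H^{(1)}_i=\tilde H^{(1)}_j\big)\to0\quad\text{as } n\to\infty.$$
   Context: Unlabeled Markov database: for a finite alphabet $\mathfrak{X}=\{1,\dots,|\mathfrak{X}|\}$, an $(m_n,n,\mathbf{P})$ unlabeled Markov database is a random $m_n\times n$ matrix $\mathbf{D}=(D_{i,j})$ with entries in $\mathfrak{X}$ whose rows are i.i.d., each row being a first-order stationary Markov chain $(D_{i,1},\dots,D_{i,n})$ with $D_{i,1}\sim\pi=[u_1,\dots,u_{|\mathfrak{X}|}]$ and transition matrix $\mathbf{P}=\gamma\mathbf{I}+(1-\gamma)\mathbf{U}$, where $\mathbf{I}$ is the identity, $U_{i,j}=u_j>0$ for all $i,j$, $\sum_j u_j=1$, and $\gamma\in\big(-\min_j\frac{u_j}{1-u_j},1\big)$; $\pi$ is the stationary distribution of $\mathbf{P}$. *)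

theory Defs
  imports Complex_Main "HOL-Library.FuncSet" "HOL-Library.Landau_Symbols"
begin

text \<open>Alphabet is {1..K}. The stationary distribution is u (u j for j in {1..K}).
  Transition matrix P = gamma I + (1-gamma) U with U a b = u b.\<close>

definition trans_prob :: "real \<Rightarrow> (nat \<Rightarrow> real) \<Rightarrow> nat \<Rightarrow> nat \<Rightarrow> real" where
  "trans_prob \<gamma> u a b = \<gamma> * (if a = b then 1 else 0) + (1 - \<gamma>) * u b"

definition row_prob :: "real \<Rightarrow> (nat \<Rightarrow> real) \<Rightarrow> nat \<Rightarrow> (nat \<Rightarrow> nat) \<Rightarrow> real" where
  "row_prob \<gamma> u n x = u (x 1) * (\<Prod>j\<in>{1..<n}. trans_prob \<gamma> u (x j) (x (Suc j)))"

definition databases :: "nat \<Rightarrow> nat \<Rightarrow> nat \<Rightarrow> (nat \<Rightarrow> nat \<Rightarrow> nat) set" where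
  "databases K m n = PiE {1..m} (\<lambda>_. PiE {1..n} (\<lambda>_. {1..K}))"

definition db_prob :: "real \<Rightarrow> (nat \<Rightarrow> real) \<Rightarrow> nat \<Rightarrow> nat \<Rightarrow> (nat \<Rightarrow> nat \<Rightarrow> nat) \<Rightarrow> real" where
  "db_prob \<gamma> u m n D = (\<Prod>i\<in>{1..m}. row_prob \<gamma> u n (D i))"

definition collapse :: "(nat \<Rightarrow> nat \<Rightarrow> nat) \<Rightarrow> nat \<Rightarrow> nat \<Rightarrow> nat" where
  "collapse D i j = (if D i j = 1 then 1 else 2)"

definition col_hist :: "nat \<Rightarrow> (nat \<Rightarrow> nat \<Rightarrow> nat) \<Rightarrow> nat \<Rightarrow> nat" where
  "col_hist m D j = card {i \<in> {1..m}. collapse D i j = 2}"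

definition collision_prob :: "nat \<Rightarrow> real \<Rightarrow> (nat \<Rightarrow> real) \<Rightarrow> nat \<Rightarrow> nat \<Rightarrow> real" where
  "collision_prob K \<gamma> u m n =
     (\<Sum>D\<in>{D \<in> databases K m n. \<exists>i\<in>{1..n}. \<exists>j\<in>{1..n}. i \<noteq> j \<and> col_hist m D i = col_hist m D j}.
        db_prob \<gamma> u m n D)"

end

theory Submission
  imports Defs
begin


lemma central_rec: "Suc h * ((2*h+2) choose (Suc h)) = 2*(2*h+1) * ((2*h) choose h)"
proof -
  have a: "Suc h * (Suc (Suc (2*h)) choose Suc h) = Suc (Suc (2*h)) * (Suc (2*h) choose h)"
    by (rule Suc_times_binomial)
  have b: "Suc h * (Suc (2*h) choose Suc h) = Suc (2*h) * ((2*h) choose h)"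
    by (rule Suc_times_binomial)
  have c: "(Suc (2*h) choose h) = (Suc (2*h) choose Suc h)"
    using binomial_symmetric[of h "Suc (2*h)"] by simp
  have h1: "\<And>s d x t cc::nat. s * d = (2*s) * x \<Longrightarrow> s * x = t * cc \<Longrightarrow> s*(s*d) = s*(2*t*cc)"
    by (metis mult.assoc mult.left_commute)
  have a': "Suc h * ((2*h+2) choose Suc h) = (2*Suc h) * (Suc (2*h) choose Suc h)"
    using a c by (simp del: binomial_Suc_Suc)
  have "Suc h * (Suc h * ((2*h+2) choose (Suc h))) = Suc h * (2*(2*h+1) * ((2*h) choose h))"
    using h1[OF a' b] by simp
  then show ?thesis by (metis nat.distinct(1) mult_left_cancel)
qed

lemma central_sq: "((2*h) choose h)^2 * (h+1) \<le> (16::nat)^h"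
proof (induction h)
  case 0 then show ?case by simp
next
  case (Suc h)
  let ?c = "(2*h) choose h" let ?d = "(2*Suc h) choose Suc h"
  have r: "Suc h * ?d = 2*(2*h+1) * ?c" using central_rec[of h] by (simp add: algebra_simps)
  have "(Suc h)^2 * (?d^2 * (Suc h + 1)) = (Suc h * ?d)^2 * (h+2)" by (simp add: power2_eq_square algebra_simps)
  also have "\<dots> = 4*(2*h+1)^2 * (h+2) * ?c^2" using r by (simp add: power2_eq_square algebra_simps)
  also have "\<dots> \<le> 16 * (h+1)^3 * ?c^2"
  proof -
    have "4*(2*h+1)^2 * (h+2) \<le> 16 * (h+1)^3" by (simp add: power2_eq_square power3_eq_cube algebra_simps)
    then show ?thesis by (intro mult_right_mono) auto
  qed
  also have "\<dots> = 16 * (h+1)^2 * (?c^2 * (h+1))" by (simp add: power2_eq_square power3_eq_cube algebra_simps)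
  also have "\<dots> \<le> 16 * (h+1)^2 * 16^h" using Suc.IH by (intro mult_left_mono) auto
  also have "\<dots> = (Suc h)^2 * 16 ^ Suc h" by simp
  finally show ?case by (simp del: power_Suc)
qed

lemma central_real: "real ((2*h) choose h) \<le> 4^h / sqrt (h+1)"
proof -
  have "real (((2*h) choose h)^2 * (h+1)) \<le> real ((16::nat)^h)" using central_sq[of h] by linarith
  hence "real ((2*h) choose h)^2 * (real h+1) \<le> 16^h" by (simp add: algebra_simps)
  hence "sqrt (real ((2*h) choose h)^2 * (real h+1)) \<le> sqrt (16^h)" by (rule real_sqrt_le_mono)
  moreover have "sqrt ((16::real)^h) = 4^h"
  proof -
    have "(16::real)^h = (4^h)^2" by (simp add: power2_eq_square power_mult_distrib[symmetric])
    thus ?thesis by simp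
  qed
  ultimately have "real ((2*h) choose h) * sqrt (real h + 1) \<le> 4^h" by (simp add: real_sqrt_mult)
  moreover have "sqrt (real h + 1) > 0" by simp
  ultimately show ?thesis by (simp add: field_simps)
qed




lemma pow_card_sum:
  assumes "finite E"
  shows "(\<Sum>P\<in>Pow E. g (card P)) = (\<Sum>k\<le>card E. of_nat (card E choose k) * g k)"
proof -
  have "(\<Sum>P\<in>Pow E. g (card P)) = (\<Sum>k\<in>{..card E}. \<Sum>P\<in>{P\<in>Pow E. card P = k}. g (card P))"
    using assms by (intro sum.group[symmetric]) (auto intro: card_mono)
  also have "\<dots> = (\<Sum>k\<le>card E. of_nat (card E choose k) * g k)"
  proof (intro sum.cong refl)
    fix k assume "k \<in> {..card E}"
    have "(\<Sum>P\<in>{P\<in>Pow E. card P = k}. g (card P)) = (\<Sum>P\<in>{P\<in>Pow E. card P = k}. g k)"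
      by (intro sum.cong) auto
    also have "\<dots> = of_nat (card {P\<in>Pow E. card P = k}) * g k" by simp
    also have "{P\<in>Pow E. card P = k} = {P. P \<subseteq> E \<and> card P = k}" by auto
    finally show "(\<Sum>P\<in>{P\<in>Pow E. card P = k}. g (card P)) = of_nat (card E choose k) * g k"
      using n_subsets[OF assms] by simp
  qed
  finally show ?thesis .
qed

lemma inner_bound:
  fixes a b :: real
  assumes "a \<ge> 0" "b \<ge> 0"
  shows "(\<Sum>k\<le>N. of_nat (N choose k) * (a^k * b^(N-k) * of_bool (k = N - k))) \<le> (a+b)^N * sqrt (2 / (real N + 1))"
proof (cases "even N")
  case False
  have "(\<Sum>k\<le>N. of_nat (N choose k) * (a^k * b^(N-k) * of_bool (k = N - k))) = 0"
  proof (intro sum.neutral ballI)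
    fix k assume "k \<in> {..N}"
    have "k \<noteq> N - k" using False by presburger
    then show "of_nat (N choose k) * (a^k * b^(N-k) * of_bool (k = N - k)) = 0" by simp
  qed
  then show ?thesis using assms by simp
next
  case True
  then obtain h where N: "N = 2*h" by blast
  have "(\<Sum>k\<le>N. of_nat (N choose k) * (a^k * b^(N-k) * of_bool (k = N - k)))
      = (\<Sum>k\<le>N. if k = h then of_nat (N choose h) * (a^h * b^h) else 0)"
    using N by (intro sum.cong) auto
  also have "\<dots> = of_nat ((2*h) choose h) * (a*b)^h" using N by (simp add: power_mult_distrib)
  also have "\<dots> \<le> (4^h / sqrt (h+1)) * (a*b)^h"
    using central_real[of h] assms by (intro mult_right_mono) auto
  also have "\<dots> = (4*(a*b))^h / sqrt (h+1)" by (simp add: power_mult_distrib)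
  also have "\<dots> \<le> ((a+b)^2)^h / sqrt (h+1)"
  proof -
    have "4*(a*b) \<le> (a+b)^2" using sum_squares_ge_zero[of "a-b" 0] by (simp add: power2_eq_square algebra_simps)
    then show ?thesis using assms by (intro divide_right_mono power_mono) auto
  qed
  also have "\<dots> = (a+b)^N / sqrt (h+1)" using N by (simp add: power_mult)
  also have "\<dots> \<le> (a+b)^N * sqrt (2 / (real N + 1))"
  proof -
    have "1 / sqrt (h+1) \<le> sqrt (2/(real N+1))"
    proof -
      have "1/sqrt (real h+1) = sqrt (1/(h+1))" by (simp add: real_sqrt_divide)
      also have "\<dots> \<le> sqrt (2/(real N+1))" using N by (intro real_sqrt_le_mono) (simp add: field_simps)
      finally show ?thesis by (simp add: add.commute)
    qed
    moreover have "0 \<le> (a+b)^N" using assms by simp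
    ultimately have "(a+b)^N * (1 / sqrt (h+1)) \<le> (a+b)^N * sqrt (2/(real N+1))"
      by (rule mult_left_mono)
    then show ?thesis by simp
  qed
  finally show ?thesis .
qed

lemma final_sum_bound:
  fixes q r :: real
  assumes "q \<ge> 0" "r > 0" "q + r \<le> 1"
  shows "(\<Sum>N\<le>m. of_nat (m choose N) * q^(m-N) * r^N * sqrt (2/(real N+1))) \<le> sqrt (2/((real m+1)*r))"
proof -
  define w where "w N = of_nat (m choose N) * q^(m-N) * r^N" for N
  define Y where "Y = 2/((real m+1)*r)"
  have w0: "w N \<ge> 0" for N using assms by (simp add: w_def)
  have wsum: "(\<Sum>N\<le>m. w N) \<le> 1"
  proof -
    have "(\<Sum>N\<le>m. w N) = (r+q)^m" unfolding w_def binomial_ring by (simp add: algebra_simps)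
    also have "\<dots> \<le> 1" using assms by (intro power_le_one) auto
    finally show ?thesis .
  qed
  have wy: "(\<Sum>N\<le>m. w N * (2/(real N+1))) \<le> Y"
  proof -
    have eq1: "(\<Sum>N\<le>m. w N * (2/(real N+1))) = (2/((real m+1)*r)) * (\<Sum>N\<le>m. of_nat (Suc m choose Suc N) * r^(Suc N) * q^(Suc m - Suc N))"
      unfolding sum_distrib_left
    proof (intro sum.cong refl)
      fix N assume "N \<in> {..m}"
      have e: "real (Suc m) * real (m choose N) = real (Suc m choose Suc N) * real (Suc N)"
        using Suc_times_binomial_eq[of m N] by (metis of_nat_mult)
      have aux: "\<And>M n1 c d Q R. M > 0 \<Longrightarrow> n1 > 0 \<Longrightarrow> M * c = d * n1 \<Longrightarrow>
          c * Q * R * (2/n1) = 2/(M*r) * (d * (r*R) * Q)"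
        using assms by (simp add: field_simps)
      have "w N * (2/(real N+1)) = 2/(real (Suc m)*r) * (real (Suc m choose Suc N) * (r*r^N) * q^(m-N))"
        unfolding w_def by (rule aux) (use e in auto)
      then show "w N * (2/(real N+1)) = 2/((real m+1)*r) * (of_nat (Suc m choose Suc N) * r^(Suc N) * q^(Suc m - Suc N))"
        by (simp del: binomial_Suc_Suc add: add.commute)
    qed
    have "(\<Sum>N\<le>m. of_nat (Suc m choose Suc N) * r^(Suc N) * q^(Suc m - Suc N))
        \<le> (\<Sum>N\<le>Suc m. of_nat (Suc m choose N) * r^N * q^(Suc m - N))"
      unfolding sum.atMost_Suc_shift[of _ m] using assms by simp
    also have "\<dots> = (r+q)^Suc m" by (rule binomial_ring[symmetric])
    also have "\<dots> \<le> 1" using assms by (intro power_le_one) auto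
    finally have "(\<Sum>N\<le>m. of_nat (Suc m choose Suc N) * r^(Suc N) * q^(Suc m - Suc N)) \<le> 1" .
    then show ?thesis unfolding Y_def eq1 using assms
      by (intro mult_left_le) auto
  qed
  have Y0: "Y > 0" using assms by (simp add: Y_def)
  define t where "t = sqrt Y"
  have t0: "t > 0" using Y0 by (simp add: t_def)
  have amgm: "sqrt y \<le> (y/t + t)/2" if "y \<ge> 0" for y
  proof -
    have "0 \<le> (sqrt y - t)^2" by simp
    hence "2*t*sqrt y \<le> y + t^2" using that by (simp add: power2_eq_square algebra_simps)
    thus ?thesis using t0 by (simp add: field_simps power2_eq_square)
  qed
  have "(\<Sum>N\<le>m. of_nat (m choose N) * q^(m-N) * r^N * sqrt (2/(real N+1))) = (\<Sum>N\<le>m. w N * sqrt (2/(real N+1)))"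
    by (simp add: w_def)
  also have "\<dots> \<le> (\<Sum>N\<le>m. w N * (((2/(real N+1))/t + t)/2))"
    by (intro sum_mono mult_left_mono amgm w0) auto
  also have "\<dots> = (\<Sum>N\<le>m. (w N * (2/(real N+1))) / (2*t) + (t/2) * w N)"
  proof -
    have pt: "\<And>a y. a * ((y/t + t)/2) = (a*y)/(2*t) + (t/2)*a" using t0 by (simp add: field_simps)
    show ?thesis by (intro sum.cong refl pt)
  qed
  also have "\<dots> = (\<Sum>N\<le>m. w N * (2/(real N+1))) / (2*t) + (t/2) * (\<Sum>N\<le>m. w N)"
    by (simp add: sum.distrib sum_divide_distrib sum_distrib_left)
  also have "\<dots> \<le> Y / (2*t) + (t/2) * 1"
    using wy wsum t0 by (intro add_mono divide_right_mono mult_left_mono) auto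
  also have "\<dots> = sqrt Y"
  proof -
    have "Y / t = t" using Y0 by (simp add: t_def real_div_sqrt)
    then show ?thesis by (simp add: t_def field_simps)
  qed
  finally show ?thesis by (simp add: Y_def)
qed




lemma anti:
  fixes R :: "'a set" and w :: "'a \<Rightarrow> real" and f :: "'a \<Rightarrow> int" and A :: "'b set" and r :: real
  assumes finR: "finite R" and finA: "finite A"
    and w0: "\<forall>x\<in>R. w x \<ge> 0" and fv: "\<forall>x\<in>R. f x \<in> {-1,0,1}"
    and tot: "(\<Sum>x\<in>{x\<in>R. f x = 0}. w x) + (\<Sum>x\<in>{x\<in>R. f x = 1}. w x) + (\<Sum>x\<in>{x\<in>R. f x = -1}. w x) \<le> 1"
    and rpos: "r > 0" and rle: "r \<le> (\<Sum>x\<in>{x\<in>R. f x = 1}. w x) + (\<Sum>x\<in>{x\<in>R. f x = -1}. w x)"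
  shows "(\<Sum>D\<in>PiE A (\<lambda>_. R). (\<Prod>k\<in>A. w (D k)) * of_bool (card {k\<in>A. f (D k) = 1} = card {k\<in>A. f (D k) = -1}))
           \<le> sqrt (2 / ((real (card A) + 1) * r))"
proof -
  define Q where "Q t = (\<Sum>x\<in>{x\<in>R. f x = t}. w x)" for t
  define q0 where "q0 = Q 0"
  define q1 where "q1 = Q 1"
  define qm where "qm = Q (-1)"
  define m where "m = card A"
  have Q0: "Q t \<ge> 0" for t unfolding Q_def using w0 by (intro sum_nonneg) auto
  define cc where "cc (E::'b set) P k = (if k \<in> P then 1 else if k \<in> E then -1 else (0::int))" for E P k
  define T where "T D = ({k\<in>A. f (D k) \<noteq> 0}, {k\<in>A. f (D k) = 1})" for D :: "'b \<Rightarrow> 'a"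
  define S where "S = Sigma (Pow A) Pow"
  define h where "h D = (\<Prod>k\<in>A. w (D k)) * of_bool (card {k\<in>A. f (D k) = 1} = card {k\<in>A. f (D k) = -1})" for D
  have finPi: "finite (PiE A (\<lambda>_. R))" using finA finR by (simp add: finite_PiE)
  have finS: "finite S" unfolding S_def using finA by (intro finite_SigmaI) (auto intro: finite_subset)
  have TS: "T ` PiE A (\<lambda>_. R) \<subseteq> S" unfolding S_def T_def by auto
  have "(\<Sum>D\<in>PiE A (\<lambda>_. R). h D) = (\<Sum>y\<in>S. \<Sum>D\<in>{D\<in>PiE A (\<lambda>_. R). T D = y}. h D)"
    using finPi finS TS by (intro sum.group[symmetric])
  also have "\<dots> = (\<Sum>(E,P)\<in>S. q1^card P * qm^(card E - card P) * q0^(m - card E) * of_bool (card P = card E - card P))"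
  proof (intro sum.cong refl, clarify)
    fix E P assume EP: "(E,P) \<in> S"
    hence EA: "E \<subseteq> A" and PE: "P \<subseteq> E" unfolding S_def by auto
    have finE: "finite E" using EA finA finite_subset by blast
    have finP: "finite P" using PE finE finite_subset by blast
    have fib: "{D\<in>PiE A (\<lambda>_. R). T D = (E,P)} = PiE A (\<lambda>k. {x\<in>R. f x = cc E P k})"
    proof (intro set_eqI iffI)
      fix D assume D: "D \<in> {D\<in>PiE A (\<lambda>_. R). T D = (E,P)}"
      hence DR: "D \<in> PiE A (\<lambda>_. R)" and E: "E = {k\<in>A. f (D k) \<noteq> 0}" and P: "P = {k\<in>A. f (D k) = 1}"
        unfolding T_def by auto
      have "f (D k) = cc E P k" if "k \<in> A" for k
        using that fv DR E P unfolding cc_def by (auto simp: PiE_iff)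
      then show "D \<in> PiE A (\<lambda>k. {x\<in>R. f x = cc E P k})" using DR by (auto simp: PiE_iff)
    next
      fix D assume D: "D \<in> PiE A (\<lambda>k. {x\<in>R. f x = cc E P k})"
      hence DR: "D \<in> PiE A (\<lambda>_. R)" and fD: "\<And>k. k \<in> A \<Longrightarrow> f (D k) = cc E P k" by (auto simp: PiE_iff)
      have "T D = (E,P)" unfolding T_def using fD EA PE by (auto simp: cc_def split: if_splits)
      then show "D \<in> {D\<in>PiE A (\<lambda>_. R). T D = (E,P)}" using DR by simp
    qed
    have ev: "of_bool (card {k\<in>A. f (D k) = 1} = card {k\<in>A. f (D k) = -1}) = (of_bool (card P = card E - card P) :: real)"
      if "D \<in> PiE A (\<lambda>k. {x\<in>R. f x = cc E P k})" for D
    proof -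
      have fD: "\<And>k. k \<in> A \<Longrightarrow> f (D k) = cc E P k" using that by (auto simp: PiE_iff)
      have "{k\<in>A. f (D k) = 1} = P" using fD EA PE by (auto simp: cc_def split: if_splits)
      moreover have "{k\<in>A. f (D k) = -1} = E - P" using fD EA PE by (auto simp: cc_def split: if_splits)
      ultimately show ?thesis using finP PE by (simp add: card_Diff_subset)
    qed
    have "(\<Sum>D\<in>{D\<in>PiE A (\<lambda>_. R). T D = (E,P)}. h D)
        = (\<Sum>D\<in>PiE A (\<lambda>k. {x\<in>R. f x = cc E P k}). (\<Prod>k\<in>A. w (D k))) * of_bool (card P = card E - card P)"
      unfolding fib h_def sum_distrib_right using ev by (intro sum.cong refl) simp
    also have "(\<Sum>D\<in>PiE A (\<lambda>k. {x\<in>R. f x = cc E P k}). (\<Prod>k\<in>A. w (D k))) = (\<Prod>k\<in>A. Q (cc E P k))"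
      unfolding Q_def using finA finR by (intro prod_sum_PiE[symmetric]) auto
    also have "(\<Prod>k\<in>A. Q (cc E P k)) = q1^card P * qm^(card E - card P) * q0^(m - card E)"
    proof -
      have "(\<Prod>k\<in>A. Q (cc E P k)) = (\<Prod>k\<in>E. Q (cc E P k)) * (\<Prod>k\<in>A - E. Q (cc E P k))"
        using finA EA by (metis prod.subset_diff mult.commute)
      also have "(\<Prod>k\<in>A - E. Q (cc E P k)) = (\<Prod>k\<in>A - E. q0)"
        using PE by (intro prod.cong refl) (auto simp: cc_def q0_def)
      also have "\<dots> = q0^(m - card E)"
        using finA EA by (simp add: m_def card_Diff_subset finE)
      also have "(\<Prod>k\<in>E. Q (cc E P k)) = (\<Prod>k\<in>P. Q (cc E P k)) * (\<Prod>k\<in>E - P. Q (cc E P k))"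
        using finE PE by (metis prod.subset_diff mult.commute)
      also have "(\<Prod>k\<in>P. Q (cc E P k)) = q1^card P" by (simp add: cc_def q1_def)
      also have "(\<Prod>k\<in>E - P. Q (cc E P k)) = qm^(card E - card P)"
        using finP PE by (simp add: cc_def qm_def card_Diff_subset)
      finally show ?thesis by simp
    qed
    finally show "(\<Sum>D\<in>{D\<in>PiE A (\<lambda>_. R). T D = (E,P)}. h D) =
        q1^card P * qm^(card E - card P) * q0^(m - card E) * of_bool (card P = card E - card P)" .
  qed
  also have "\<dots> = (\<Sum>E\<in>Pow A. \<Sum>P\<in>Pow E. q1^card P * qm^(card E - card P) * q0^(m - card E) * of_bool (card P = card E - card P))"
    unfolding S_def using finA by (subst sum.Sigma) (auto intro: finite_subset)
  also have "\<dots> \<le> (\<Sum>E\<in>Pow A. q0^(m - card E) * ((q1+qm)^card E * sqrt (2 / (real (card E) + 1))))"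
  proof (intro sum_mono)
    fix E assume "E \<in> Pow A"
    hence finE: "finite E" using finA finite_subset by blast
    have eq1: "(\<Sum>P\<in>Pow E. q1^card P * qm^(card E - card P) * q0^(m - card E) * of_bool (card P = card E - card P))
        = q0^(m - card E) * (\<Sum>P\<in>Pow E. q1^card P * qm^(card E - card P) * of_bool (card P = card E - card P))"
      by (simp add: sum_distrib_left algebra_simps)
    have "(\<Sum>P\<in>Pow E. q1^card P * qm^(card E - card P) * of_bool (card P = card E - card P))
       = (\<Sum>k\<le>card E. of_nat (card E choose k) * (q1^k * qm^(card E - k) * of_bool (k = card E - k)))"
      using pow_card_sum[OF finE, of "\<lambda>k. q1^k * qm^(card E - k) * of_bool (k = card E - k)"] by simp
    also have "\<dots> \<le> (q1+qm)^card E * sqrt (2 / (real (card E) + 1))"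
      using Q0 by (intro inner_bound) (auto simp: q1_def qm_def)
    finally have le: "(\<Sum>P\<in>Pow E. q1^card P * qm^(card E - card P) * of_bool (card P = card E - card P))
       \<le> (q1+qm)^card E * sqrt (2 / (real (card E) + 1))" .
    show "(\<Sum>P\<in>Pow E. q1^card P * qm^(card E - card P) * q0^(m - card E) * of_bool (card P = card E - card P))
        \<le> q0^(m - card E) * ((q1+qm)^card E * sqrt (2 / (real (card E) + 1)))"
      unfolding eq1 using Q0 le by (intro mult_left_mono) (auto simp: q0_def)
  qed
  also have "\<dots> = (\<Sum>N\<le>m. of_nat (m choose N) * q0^(m-N) * (q1+qm)^N * sqrt (2/(real N+1)))"
    using pow_card_sum[OF finA, of "\<lambda>k. q0^(m - k) * ((q1+qm)^k * sqrt (2 / (real k + 1)))"]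
    by (simp add: m_def algebra_simps)
  also have "\<dots> \<le> sqrt (2/((real m+1)*(q1+qm)))"
    using Q0 tot rpos rle by (intro final_sum_bound) (auto simp: q0_def q1_def qm_def Q_def)
  also have "\<dots> \<le> sqrt (2 / ((real (card A) + 1) * r))"
    using rpos rle by (intro real_sqrt_le_mono divide_left_mono mult_left_mono mult_pos_pos)
      (auto simp: m_def q1_def qm_def Q_def)
  finally show ?thesis unfolding h_def .
qed




definition rows :: "nat \<Rightarrow> nat \<Rightarrow> (nat \<Rightarrow> nat) set" where
  "rows K n = PiE {1..n} (\<lambda>_. {1..K})"

definition pw :: "real \<Rightarrow> (nat \<Rightarrow> real) \<Rightarrow> nat \<Rightarrow> nat \<Rightarrow> nat \<Rightarrow> real" where
  "pw \<gamma> u k a c = \<gamma>^k * of_bool (a = c) + (1 - \<gamma>^k) * u c"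

lemma row_prob_upd:
  assumes "n \<ge> 1"
  shows "row_prob \<gamma> u (Suc n) (x(Suc n := b)) = row_prob \<gamma> u n x * trans_prob \<gamma> u (x n) b"
proof -
  have i: "{1..<Suc n} = insert n {1..<n}" using assms by auto
  have "(\<Prod>j\<in>{1..<n}. trans_prob \<gamma> u ((x(Suc n := b)) j) ((x(Suc n := b)) (Suc j)))
      = (\<Prod>j\<in>{1..<n}. trans_prob \<gamma> u (x j) (x (Suc j)))"
    by (intro prod.cong refl) auto
  then show ?thesis using assms unfolding row_prob_def i by (simp add: algebra_simps)
qed

lemma sum_of_bool_eq:
  assumes "finite S" "b \<in> S"
  shows "(\<Sum>a\<in>S. of_bool (a = b) * f a) = (f b :: real)"
proof -
  have "(\<Sum>a\<in>S. of_bool (a = b) * f a) = (\<Sum>a\<in>S. if a = b then f a else 0)" by (intro sum.cong) auto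
  then show ?thesis using assms by (simp add: sum.delta')
qed

lemma sum_of_bool_eq':
  assumes "finite S" "b \<in> S"
  shows "(\<Sum>a\<in>S. of_bool (b = a) * f a) = (f b :: real)"
  using sum_of_bool_eq[OF assms, of f] by (simp add: eq_commute)

locale mc =
  fixes K :: nat and u :: "nat \<Rightarrow> real" and \<gamma> :: real
  assumes K2: "K \<ge> 2" and upos: "\<forall>j\<in>{1..K}. u j > 0" and usum: "(\<Sum>j\<in>{1..K}. u j) = 1"
    and g1: "\<gamma> < 1" and gm1: "\<gamma> > -1" and diagpos: "\<forall>j\<in>{1..K}. \<gamma> + (1-\<gamma>) * u j > 0"
begin

abbreviation "tp \<equiv> trans_prob \<gamma> u"

definition G :: "nat \<Rightarrow> ((nat \<Rightarrow> nat) \<Rightarrow> real) \<Rightarrow> real" where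
  "G n \<phi> = (\<Sum>x\<in>rows K n. row_prob \<gamma> u n x * \<phi> x)"

lemma tp_pos: "a \<in> {1..K} \<Longrightarrow> b \<in> {1..K} \<Longrightarrow> tp a b > 0"
  using upos diagpos g1 unfolding trans_prob_def by (cases "a = b") auto

lemma usum': "sum u {Suc 0..K} = 1" using usum by simp

lemma tp_sum: "a \<in> {1..K} \<Longrightarrow> (\<Sum>b\<in>{1..K}. tp a b) = 1"
  unfolding trans_prob_def by (simp add: sum.distrib sum_distrib_left[symmetric] usum')

lemma u_tp: "b \<in> {1..K} \<Longrightarrow> (\<Sum>a\<in>{1..K}. u a * tp a b) = u b"
proof -
  assume b: "b \<in> {1..K}"
  have "(\<Sum>a\<in>{1..K}. u a * tp a b) = (\<Sum>a\<in>{1..K}. \<gamma> * (u a * of_bool (a = b)) + (1-\<gamma>) * u b * u a)"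
    by (intro sum.cong refl) (simp add: trans_prob_def algebra_simps)
  also have "\<dots> = (\<Sum>a\<in>{1..K}. \<gamma> * (u a * of_bool (a = b))) + (1-\<gamma>) * u b * (\<Sum>a\<in>{1..K}. u a)"
    by (simp only: sum.distrib flip: sum_distrib_left)
  also have "(\<Sum>a\<in>{1..K}. \<gamma> * (u a * of_bool (a = b))) = (\<Sum>a\<in>{1..K}. of_bool (a = b) * (\<gamma> * u a))"
    by (intro sum.cong refl) simp
  also have "\<dots> = \<gamma> * u b" using b by (intro sum_of_bool_eq) auto
  finally show ?thesis using usum by (simp add: algebra_simps)
qed

lemma row_prob_nonneg: "n \<ge> 1 \<Longrightarrow> x \<in> rows K n \<Longrightarrow> row_prob \<gamma> u n x \<ge> 0"
proof -
  assume n: "n \<ge> 1" and x: "x \<in> rows K n"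
  have m: "\<And>j. j \<in> {1..n} \<Longrightarrow> x j \<in> {1..K}" using x unfolding rows_def by (auto simp: PiE_iff)
  have "u (x 1) \<ge> 0" using m[of 1] n upos by (auto intro: less_imp_le)
  moreover have "(\<Prod>j\<in>{1..<n}. tp (x j) (x (Suc j))) \<ge> 0"
    by (intro prod_nonneg) (use m tp_pos in \<open>auto intro: less_imp_le\<close>)
  ultimately show ?thesis unfolding row_prob_def by simp
qed

lemma rows_mem: "x \<in> rows K n \<Longrightarrow> j \<in> {1..n} \<Longrightarrow> x j \<in> {1..K}"
  unfolding rows_def by (auto simp: PiE_iff)

lemma finite_rows: "finite (rows K n)"
  unfolding rows_def by (simp add: finite_PiE)

lemma sum_rows_Suc:
  "(\<Sum>x\<in>rows K (Suc n). F x) = (\<Sum>(b,x)\<in>{1..K} \<times> rows K n. F (x(Suc n := b)))"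
proof -
  have e: "{1..Suc n} = insert (Suc n) {1..n}" by auto
  show ?thesis unfolding rows_def e
    by (intro sum.reindex_bij_witness[of _ "\<lambda>(y,g). g(Suc n := y)" "\<lambda>g. (g (Suc n), g(Suc n := undefined))"])
       (auto simp: PiE_def extensional_def)
qed

lemma G_Suc:
  assumes "n \<ge> 1"
  shows "G (Suc n) \<phi> = G n (\<lambda>x. \<Sum>b\<in>{1..K}. tp (x n) b * \<phi> (x(Suc n := b)))"
proof -
  have "G (Suc n) \<phi> = (\<Sum>(b,x)\<in>{1..K} \<times> rows K n. row_prob \<gamma> u (Suc n) (x(Suc n := b)) * \<phi> (x(Suc n := b)))"
    unfolding G_def by (rule sum_rows_Suc)
  also have "\<dots> = (\<Sum>b\<in>{1..K}. \<Sum>x\<in>rows K n. row_prob \<gamma> u (Suc n) (x(Suc n := b)) * \<phi> (x(Suc n := b)))"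
    by (subst sum.cartesian_product[symmetric]) simp
  also have "\<dots> = (\<Sum>x\<in>rows K n. \<Sum>b\<in>{1..K}. row_prob \<gamma> u (Suc n) (x(Suc n := b)) * \<phi> (x(Suc n := b)))"
    by (rule sum.swap)
  also have "\<dots> = G n (\<lambda>x. \<Sum>b\<in>{1..K}. tp (x n) b * \<phi> (x(Suc n := b)))"
    unfolding G_def using assms by (simp add: row_prob_upd sum_distrib_left algebra_simps)
  finally show ?thesis .
qed

lemma G_base: "G 1 \<phi> = (\<Sum>b\<in>{1..K}. u b * \<phi> ((\<lambda>_. undefined)(1 := b)))"
proof -
  have "G 1 \<phi> = (\<Sum>x\<in>rows K 1. u (x 1) * \<phi> x)"
    unfolding G_def row_prob_def by simp
  also have "\<dots> = (\<Sum>b\<in>{1..K}. u b * \<phi> ((\<lambda>_. undefined)(1 := b)))"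
  proof -
    have E': "(\<lambda>_. undefined)(Suc 0 := x (Suc 0)) = x" if "\<forall>y. y \<noteq> Suc 0 \<longrightarrow> x y = undefined" for x :: "nat \<Rightarrow> nat"
      using that by (auto simp: fun_eq_iff)
    show ?thesis
      by (intro sum.reindex_bij_witness[of _ "\<lambda>b. (\<lambda>_. undefined)(1 := b)" "\<lambda>x. x 1"])
         (auto simp: rows_def PiE_def extensional_def E')

  qed
  finally show ?thesis .
qed

lemma G_cong: "(\<And>x. x \<in> rows K n \<Longrightarrow> \<phi> x = \<psi> x) \<Longrightarrow> G n \<phi> = G n \<psi>"
  unfolding G_def by (intro sum.cong) auto

lemma G_mono: "n \<ge> 1 \<Longrightarrow> (\<And>x. x \<in> rows K n \<Longrightarrow> \<phi> x \<le> \<psi> x) \<Longrightarrow> G n \<phi> \<le> G n \<psi>"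
  unfolding G_def by (intro sum_mono mult_left_mono) (auto intro: row_prob_nonneg)

lemma G_group_last:
  assumes "n \<ge> 1"
  shows "G n (\<lambda>x. \<phi> x * \<psi> (x n)) = (\<Sum>a\<in>{1..K}. G n (\<lambda>x. \<phi> x * of_bool (x n = a)) * \<psi> a)"
proof -
  have "(\<Sum>a\<in>{1..K}. G n (\<lambda>x. \<phi> x * of_bool (x n = a)) * \<psi> a)
      = (\<Sum>x\<in>rows K n. \<Sum>a\<in>{1..K}. row_prob \<gamma> u n x * \<phi> x * (of_bool (x n = a) * \<psi> a))"
    unfolding G_def sum_distrib_right by (subst sum.swap) (simp add: algebra_simps)
  also have "\<dots> = (\<Sum>x\<in>rows K n. row_prob \<gamma> u n x * \<phi> x * \<psi> (x n))"
  proof (intro sum.cong refl)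
    fix x assume "x \<in> rows K n"
    hence "x n \<in> {1..K}" using assms by (intro rows_mem) auto
    hence "(\<Sum>a\<in>{1..K}. of_bool (x n = a) * \<psi> a) = \<psi> (x n)" by (intro sum_of_bool_eq') auto
    then show "(\<Sum>a\<in>{1..K}. row_prob \<gamma> u n x * \<phi> x * (of_bool (x n = a) * \<psi> a)) = row_prob \<gamma> u n x * \<phi> x * \<psi> (x n)"
      by (simp only: sum_distrib_left[symmetric])
  qed
  finally show ?thesis unfolding G_def by (simp add: algebra_simps)
qed

lemma stat_all: "n \<ge> 1 \<Longrightarrow> \<forall>c\<in>{1..K}. G n (\<lambda>x. of_bool (x n = c)) = u c"
proof (induction n rule: dec_induct)
  case base
  show ?case
  proof
    fix c assume c: "c \<in> {1..K}"
    have "G 1 (\<lambda>x. of_bool (x 1 = c)) = (\<Sum>b\<in>{1..K}. of_bool (b = c) * u b)"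
      unfolding G_base by (intro sum.cong refl) simp
    also have "\<dots> = u c" using c by (intro sum_of_bool_eq) auto
    finally show "G 1 (\<lambda>x. of_bool (x 1 = c)) = u c" .
  qed
next
  case (step n)
  show ?case
  proof
    fix c assume c: "c \<in> {1..K}"
    have "G (Suc n) (\<lambda>x. of_bool (x (Suc n) = c)) = G n (\<lambda>x. 1 * tp (x n) c)"
      unfolding G_Suc[OF step(1)]
    proof (intro G_cong)
      fix x
      have "(\<Sum>b\<in>{1..K}. tp (x n) b * of_bool ((x(Suc n := b)) (Suc n) = c)) = (\<Sum>b\<in>{1..K}. of_bool (b = c) * tp (x n) b)"
        by (intro sum.cong refl) simp
      also have "\<dots> = tp (x n) c" using c by (intro sum_of_bool_eq) auto
      finally show "(\<Sum>b\<in>{1..K}. tp (x n) b * of_bool ((x(Suc n := b)) (Suc n) = c)) = 1 * tp (x n) c" by simp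
    qed
    also have "\<dots> = (\<Sum>a\<in>{1..K}. G n (\<lambda>x. 1 * of_bool (x n = a)) * tp a c)"
      by (rule G_group_last[OF step(1)])
    also have "\<dots> = (\<Sum>a\<in>{1..K}. u a * tp a c)"
      using step.IH by (intro sum.cong refl) simp
    also have "\<dots> = u c" by (rule u_tp) (use c in auto)
    finally show "G (Suc n) (\<lambda>x. of_bool (x (Suc n) = c)) = u c" .
  qed
qed

lemma stat: "n \<ge> 1 \<Longrightarrow> c \<in> {1..K} \<Longrightarrow> G n (\<lambda>x. of_bool (x n = c)) = u c"
  using stat_all by blast

lemma G_one: "n \<ge> 1 \<Longrightarrow> G n (\<lambda>_. 1) = 1"
proof -
  assume n: "n \<ge> 1"
  have "G n (\<lambda>_. 1) = G n (\<lambda>x. 1 * (\<lambda>_. 1) (x n))" by simp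
  also have "\<dots> = (\<Sum>a\<in>{1..K}. G n (\<lambda>x. 1 * of_bool (x n = a)) * 1)"
    using n by (rule G_group_last)
  also have "\<dots> = (\<Sum>a\<in>{1..K}. u a)" using n by (intro sum.cong refl) (simp add: stat)
  finally show ?thesis using usum by simp
qed

lemma pw_step:
  assumes "a \<in> {1..K}" "c \<in> {1..K}"
  shows "(\<Sum>c'\<in>{1..K}. pw \<gamma> u k a c' * tp c' c) = pw \<gamma> u (Suc k) a c"
proof -
  have "(\<Sum>c'\<in>{1..K}. pw \<gamma> u k a c' * tp c' c)
      = (\<Sum>c'\<in>{1..K}. \<gamma>^k * (of_bool (a = c') * tp c' c) + (1 - \<gamma>^k) * (u c' * tp c' c))"
    unfolding pw_def by (intro sum.cong refl) (simp add: algebra_simps)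
  also have "\<dots> = \<gamma>^k * (\<Sum>c'\<in>{1..K}. of_bool (a = c') * tp c' c) + (1 - \<gamma>^k) * (\<Sum>c'\<in>{1..K}. u c' * tp c' c)"
    by (simp only: sum.distrib flip: sum_distrib_left)
  also have "(\<Sum>c'\<in>{1..K}. of_bool (a = c') * tp c' c) = tp a c"
    using assms by (intro sum_of_bool_eq') auto
  also have "(\<Sum>c'\<in>{1..K}. u c' * tp c' c) = u c" by (rule u_tp) (use assms in auto)
  finally show ?thesis unfolding pw_def trans_prob_def by (simp add: algebra_simps)
qed

lemma E_formula_all:
  assumes "1 \<le> i" "i \<le> n" "a \<in> {1..K}"
  shows "\<forall>c\<in>{1..K}. G n (\<lambda>x. of_bool (x i = a) * of_bool (x n = c)) = u a * pw \<gamma> u (n - i) a c"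
  using assms(2)
proof (induction n rule: dec_induct)
  case base
  show ?case
  proof
    fix c assume c: "c \<in> {1..K}"
    show "G i (\<lambda>x. of_bool (x i = a) * of_bool (x i = c)) = u a * pw \<gamma> u (i - i) a c"
    proof (cases "a = c")
      case True
      have "G i (\<lambda>x. of_bool (x i = a) * of_bool (x i = c)) = G i (\<lambda>x. of_bool (x i = a))"
        using True by (intro G_cong) simp
      then show ?thesis using assms stat[of i a] True by (simp add: pw_def)
    next
      case False
      have "G i (\<lambda>x. of_bool (x i = a) * of_bool (x i = c)) = G i (\<lambda>_. 0)"
        using False by (intro G_cong) auto
      then show ?thesis using False by (simp add: G_def pw_def)
    qed
  qed
next
  case (step n)
  have n1: "n \<ge> 1" using step assms by simp
  show ?case
  proof
    fix c assume c: "c \<in> {1..K}"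
    have "G (Suc n) (\<lambda>x. of_bool (x i = a) * of_bool (x (Suc n) = c)) = G n (\<lambda>x. of_bool (x i = a) * tp (x n) c)"
      unfolding G_Suc[OF n1]
    proof (intro G_cong)
      fix x
      have "(\<Sum>b\<in>{1..K}. tp (x n) b * (of_bool ((x(Suc n := b)) i = a) * of_bool ((x(Suc n := b)) (Suc n) = c)))
          = (\<Sum>b\<in>{1..K}. of_bool (b = c) * (of_bool (x i = a) * tp (x n) b))"
        using step by (intro sum.cong refl) simp
      also have "\<dots> = of_bool (x i = a) * tp (x n) c" using c by (intro sum_of_bool_eq) auto
      finally show "(\<Sum>b\<in>{1..K}. tp (x n) b * (of_bool ((x(Suc n := b)) i = a) * of_bool ((x(Suc n := b)) (Suc n) = c)))
          = of_bool (x i = a) * tp (x n) c" .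
    qed
    also have "\<dots> = (\<Sum>c'\<in>{1..K}. G n (\<lambda>x. of_bool (x i = a) * of_bool (x n = c')) * tp c' c)"
      using n1 by (rule G_group_last)
    also have "\<dots> = (\<Sum>c'\<in>{1..K}. u a * (pw \<gamma> u (n - i) a c' * tp c' c))"
      using step.IH by (intro sum.cong refl) (simp add: algebra_simps)
    also have "\<dots> = u a * pw \<gamma> u (Suc (n - i)) a c"
    proof -
      have "(\<Sum>c'\<in>{1..K}. pw \<gamma> u (n - i) a c' * tp c' c) = pw \<gamma> u (Suc (n - i)) a c"
        by (rule pw_step) (use assms c in auto)
      then show ?thesis by (simp only: sum_distrib_left[symmetric])
    qed
    also have "Suc (n - i) = Suc n - i" using step by simp
    finally show "G (Suc n) (\<lambda>x. of_bool (x i = a) * of_bool (x (Suc n) = c)) = u a * pw \<gamma> u (Suc n - i) a c" .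
  qed
qed

lemma E_formula:
  assumes "1 \<le> i" "i \<le> n" "a \<in> {1..K}" "c \<in> {1..K}"
  shows "G n (\<lambda>x. of_bool (x i = a) * of_bool (x n = c)) = u a * pw \<gamma> u (n - i) a c"
  using E_formula_all[OF assms(1-3)] assms(4) by blast

lemma G_extend:
  assumes "n \<ge> 1" "\<And>x b. \<phi> (x(Suc n := b)) = \<phi> x"
  shows "G (Suc n) \<phi> = G n \<phi>"
proof -
  have "G (Suc n) \<phi> = G n (\<lambda>x. \<Sum>b\<in>{1..K}. tp (x n) b * \<phi> x)"
    using assms by (simp add: G_Suc)
  also have "\<dots> = G n \<phi>"
  proof (intro G_cong)
    fix x assume "x \<in> rows K n"
    hence "x n \<in> {1..K}" using assms by (intro rows_mem) auto
    then show "(\<Sum>b\<in>{1..K}. tp (x n) b * \<phi> x) = \<phi> x"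
      by (simp only: sum_distrib_right[symmetric] tp_sum)
  qed
  finally show ?thesis .
qed

lemma G_restrict:
  assumes "1 \<le> j" "j \<le> n" "\<And>k x b. k > j \<Longrightarrow> \<phi> (x(k := b)) = \<phi> x"
  shows "G n \<phi> = G j \<phi>"
  using assms(2)
proof (induction n rule: dec_induct)
  case base then show ?case by simp
next
  case (step n)
  have "G (Suc n) \<phi> = G n \<phi>" using step assms by (intro G_extend) auto
  then show ?case using step by simp
qed

lemma two_point:
  assumes "1 \<le> i" "i < j" "j \<le> n" "a \<in> {1..K}" "b \<in> {1..K}"
  shows "G n (\<lambda>x. of_bool (x i = a) * of_bool (x j = b)) = u a * pw \<gamma> u (j - i) a b"
proof -
  have "G n (\<lambda>x. of_bool (x i = a) * of_bool (x j = b)) = G j (\<lambda>x. of_bool (x i = a) * of_bool (x j = b))"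
    using assms by (intro G_restrict) auto
  also have "\<dots> = u a * pw \<gamma> u (j - i) a b" using assms by (intro E_formula) auto
  finally show ?thesis .
qed

end



context mc begin

definition cst where "cst = u 1 * u 2 * (1 - \<bar>\<gamma>\<bar>)"

lemma cst_pos: "cst > 0"
  using upos K2 g1 gm1 unfolding cst_def by (auto intro!: mult_pos_pos)

lemma col_hist_alt: "col_hist m D c = card {k\<in>{1..m}. D k c \<noteq> 1}"
  unfolding col_hist_def collapse_def by (intro arg_cong[where f=card]) auto

lemma pair_bound:
  assumes ij: "1 \<le> i" "i < j" "j \<le> n"
  shows "(\<Sum>D\<in>databases K m n. db_prob \<gamma> u m n D * of_bool (col_hist m D i = col_hist m D j))
     \<le> sqrt (2 / ((real m + 1) * cst))"
proof -
  have n1: "n \<ge> 1" using ij by simp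
  define f where "f x = (of_bool (x i \<noteq> 1) - of_bool (x j \<noteq> 1) :: int)" for x :: "nat \<Rightarrow> nat"
  define A where "A = {1..m}"
  have fv: "f x \<in> {-1,0,1}" for x unfolding f_def by auto
  have ev: "(col_hist m D i = col_hist m D j) \<longleftrightarrow> card {k\<in>A. f (D k) = 1} = card {k\<in>A. f (D k) = -1}" for D
  proof -
    define B where "B = {k\<in>A. D k i \<noteq> 1 \<and> D k j \<noteq> 1}"
    have finA: "finite A" unfolding A_def by simp
    have s1: "{k\<in>A. D k i \<noteq> 1} = {k\<in>A. f (D k) = 1} \<union> B" unfolding B_def f_def by auto
    have s2: "{k\<in>A. D k j \<noteq> 1} = {k\<in>A. f (D k) = -1} \<union> B" unfolding B_def f_def by auto
    have c1: "card {k\<in>A. D k i \<noteq> 1} = card {k\<in>A. f (D k) = 1} + card B"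
      unfolding s1 using finA by (intro card_Un_disjoint) (auto simp: B_def f_def)
    have c2: "card {k\<in>A. D k j \<noteq> 1} = card {k\<in>A. f (D k) = -1} + card B"
      unfolding s2 using finA by (intro card_Un_disjoint) (auto simp: B_def f_def)
    show ?thesis unfolding col_hist_alt A_def[symmetric] c1 c2 by simp
  qed
  have Qeq: "(\<Sum>x\<in>{x\<in>rows K n. f x = t}. row_prob \<gamma> u n x) = G n (\<lambda>x. of_bool (f x = t))" for t
    unfolding G_def using finite_rows by (simp add: sum.inter_filter of_bool_def if_distrib cong: if_cong)
  have "(\<Sum>D\<in>databases K m n. db_prob \<gamma> u m n D * of_bool (col_hist m D i = col_hist m D j))
     = (\<Sum>D\<in>PiE A (\<lambda>_. rows K n). (\<Prod>k\<in>A. row_prob \<gamma> u n (D k)) * of_bool (card {k\<in>A. f (D k) = 1} = card {k\<in>A. f (D k) = -1}))"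
    unfolding databases_def db_prob_def rows_def[symmetric] A_def[symmetric] ev by simp
  also have "\<dots> \<le> sqrt (2 / ((real (card A) + 1) * cst))"
  proof (rule anti)
    show "finite (rows K n)" by (rule finite_rows)
    show "finite A" unfolding A_def by simp
    show "\<forall>x\<in>rows K n. row_prob \<gamma> u n x \<ge> 0" using n1 row_prob_nonneg by blast
    show "\<forall>x\<in>rows K n. f x \<in> {-1,0,1}" using fv by blast
    show "cst > 0" by (rule cst_pos)
    have "G n (\<lambda>x. of_bool (f x = 0)) + G n (\<lambda>x. of_bool (f x = 1)) + G n (\<lambda>x. of_bool (f x = -1))
        = G n (\<lambda>x. of_bool (f x = 0) + of_bool (f x = 1) + of_bool (f x = -1))"
      unfolding G_def by (simp add: sum.distrib algebra_simps)
    also have "\<dots> = G n (\<lambda>_. 1)" using fv by (intro G_cong) (auto simp: of_bool_def)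
    also have "\<dots> = 1" using n1 by (rule G_one)
    finally show "(\<Sum>x\<in>{x\<in>rows K n. f x = 0}. row_prob \<gamma> u n x) + (\<Sum>x\<in>{x\<in>rows K n. f x = 1}. row_prob \<gamma> u n x)
        + (\<Sum>x\<in>{x\<in>rows K n. f x = -1}. row_prob \<gamma> u n x) \<le> 1" unfolding Qeq by simp
    have "G n (\<lambda>_. 0) \<le> G n (\<lambda>x. of_bool (f x = 1))" using n1 by (intro G_mono) auto
    then have Q1: "G n (\<lambda>x. of_bool (f x = 1)) \<ge> 0" by (simp add: G_def)
    have "G n (\<lambda>x. of_bool (x i = 1) * of_bool (x j = 2)) \<le> G n (\<lambda>x. of_bool (f x = -1))"
      using n1 by (intro G_mono) (auto simp: f_def)
    moreover have "G n (\<lambda>x. of_bool (x i = 1) * of_bool (x j = 2)) = u 1 * pw \<gamma> u (j - i) 1 2"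
      using ij K2 by (intro two_point) auto
    moreover have "u 1 * pw \<gamma> u (j - i) 1 2 \<ge> cst"
    proof -
      have k: "j - i \<ge> 1" using ij by simp
      have "\<gamma>^(j-i) \<le> \<bar>\<gamma>\<bar>^(j-i)" by (metis abs_ge_self power_abs abs_le_iff)
      also have "\<dots> \<le> \<bar>\<gamma>\<bar>^1" using k g1 gm1 by (intro power_decreasing) auto
      finally have "1 - \<bar>\<gamma>\<bar> \<le> 1 - \<gamma>^(j-i)" by simp
      moreover have "u 1 > 0" "u 2 > 0" using upos K2 by auto
      ultimately show ?thesis unfolding cst_def pw_def by (simp add: mult_left_mono mult_right_mono)
    qed
    ultimately show "cst \<le> (\<Sum>x\<in>{x\<in>rows K n. f x = 1}. row_prob \<gamma> u n x) + (\<Sum>x\<in>{x\<in>rows K n. f x = -1}. row_prob \<gamma> u n x)"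
      unfolding Qeq using Q1 by linarith
  qed
  also have "card A = m" unfolding A_def by simp
  finally show ?thesis .
qed

end



context mc begin

lemma db_prob_nonneg: "n \<ge> 1 \<Longrightarrow> D \<in> databases K m n \<Longrightarrow> db_prob \<gamma> u m n D \<ge> 0"
  unfolding db_prob_def databases_def rows_def[symmetric]
  by (intro prod_nonneg row_prob_nonneg) (auto simp: PiE_iff)

lemma coll_bound:
  assumes n1: "n \<ge> 1"
  shows "collision_prob K \<gamma> u m n \<le> real n ^ 2 * sqrt (2 / ((real m + 1) * cst))"
proof -
  define P where "P = {p \<in> {1..n} \<times> {1..n}. fst p < snd p}"
  define DB where "DB = databases K m n"
  define w where "w D = db_prob \<gamma> u m n D" for D
  define bd where "bd = sqrt (2 / ((real m + 1) * cst))"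
  have finDB: "finite DB" unfolding DB_def databases_def by (simp add: finite_PiE)
  have finP: "finite P" unfolding P_def by simp
  have "collision_prob K \<gamma> u m n = (\<Sum>D\<in>DB. w D * of_bool (\<exists>i\<in>{1..n}. \<exists>j\<in>{1..n}. i \<noteq> j \<and> col_hist m D i = col_hist m D j))"
    unfolding collision_prob_def DB_def w_def using finDB[unfolded DB_def]
    by (simp add: sum.inter_filter of_bool_def if_distrib cong: if_cong)
  also have "\<dots> \<le> (\<Sum>D\<in>DB. \<Sum>p\<in>P. w D * of_bool (col_hist m D (fst p) = col_hist m D (snd p)))"
  proof (intro sum_mono)
    fix D assume D: "D \<in> DB"
    have w0: "w D \<ge> 0" using D n1 db_prob_nonneg unfolding DB_def w_def by blast
    show "w D * of_bool (\<exists>i\<in>{1..n}. \<exists>j\<in>{1..n}. i \<noteq> j \<and> col_hist m D i = col_hist m D j)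
        \<le> (\<Sum>p\<in>P. w D * of_bool (col_hist m D (fst p) = col_hist m D (snd p)))"
    proof (cases "\<exists>i\<in>{1..n}. \<exists>j\<in>{1..n}. i \<noteq> j \<and> col_hist m D i = col_hist m D j")
      case True
      then obtain i j where ij: "i \<in> {1..n}" "j \<in> {1..n}" "i \<noteq> j" "col_hist m D i = col_hist m D j" by blast
      define p where "p = (min i j, max i j)"
      have pP: "p \<in> P" unfolding P_def p_def using ij by (auto simp: min_def max_def)
      have peq: "col_hist m D (fst p) = col_hist m D (snd p)" unfolding p_def using ij by (auto simp: min_def max_def)
      have "w D * of_bool (col_hist m D (fst p) = col_hist m D (snd p)) \<le> (\<Sum>p\<in>P. w D * of_bool (col_hist m D (fst p) = col_hist m D (snd p)))"
        using finP pP w0 by (intro member_le_sum) auto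
      then show ?thesis using True peq by simp
    next
      case False
      have nn: "0 \<le> (\<Sum>p\<in>P. w D * of_bool (col_hist m D (fst p) = col_hist m D (snd p)))"
        using w0 by (intro sum_nonneg) auto
      have ff: "(\<exists>i\<in>{1..n}. \<exists>j\<in>{1..n}. i \<noteq> j \<and> col_hist m D i = col_hist m D j) = False" using False by blast
      show ?thesis unfolding ff using nn by simp
    qed
  qed
  also have "\<dots> = (\<Sum>p\<in>P. \<Sum>D\<in>DB. w D * of_bool (col_hist m D (fst p) = col_hist m D (snd p)))"
    by (rule sum.swap)
  also have "\<dots> \<le> (\<Sum>p\<in>P. bd)"
  proof (intro sum_mono)
    fix p assume "p \<in> P"
    then show "(\<Sum>D\<in>DB. w D * of_bool (col_hist m D (fst p) = col_hist m D (snd p))) \<le> bd"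
      unfolding DB_def w_def bd_def P_def by (intro pair_bound) auto
  qed
  also have "\<dots> = real (card P) * bd" by simp
  also have "\<dots> \<le> real n ^ 2 * bd"
  proof -
    have "card P \<le> card ({1..n} \<times> {1..n})" unfolding P_def by (intro card_mono) auto
    then have c: "card P \<le> n * n" by simp
    have "real (card P) \<le> real (n * n)" using c by (simp only: of_nat_le_iff)
    then have "real (card P) \<le> real n ^ 2" by (simp add: power2_eq_square)
    moreover have "bd \<ge> 0" unfolding bd_def using cst_pos by simp
    ultimately show ?thesis by (rule mult_right_mono)
  qed
  finally show ?thesis unfolding bd_def .
qed

lemma coll_nonneg: "n \<ge> 1 \<Longrightarrow> collision_prob K \<gamma> u m n \<ge> 0"
  unfolding collision_prob_def by (intro sum_nonneg db_prob_nonneg) auto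

end

theorem lemma1:
  fixes K :: nat and u :: "nat \<Rightarrow> real" and \<gamma> :: real and m :: "nat \<Rightarrow> nat"
  assumes "K \<ge> 2"
    and "\<forall>j\<in>{1..K}. u j > 0"
    and "(\<Sum>j\<in>{1..K}. u j) = 1"
    and "- Min ((\<lambda>j. u j / (1 - u j)) ` {1..K}) < \<gamma>" and "\<gamma> < 1"
    and "(\<lambda>n. real n ^ 4) \<in> o(\<lambda>n. real (m n))"
  shows "(\<lambda>n. collision_prob K \<gamma> u (m n) n) \<longlonglongrightarrow> 0"
proof -
  note K2 = assms(1) and upos = assms(2) and usum = assms(3) and gmin = assms(4) and g1 = assms(5)
  have ult1: "u j < 1" if j: "j \<in> {1..K}" for j
  proof -
    have "\<exists>j'\<in>{1..K}. j' \<noteq> j"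
    proof (cases "j = 1")
      case True then show ?thesis using K2 by (intro bexI[of _ 2]) auto
    next
      case False then show ?thesis using K2 j by (intro bexI[of _ 1]) auto
    qed
    then obtain j' where j': "j' \<in> {1..K}" "j' \<noteq> j" by blast
    have "(\<Sum>a\<in>{1..K}. u a) = u j + (\<Sum>a\<in>{1..K} - {j}. u a)"
      using j by (simp add: sum.remove)
    moreover have "(\<Sum>a\<in>{1..K} - {j}. u a) > 0"
      using j' upos by (intro sum_pos2[of _ j']) (auto intro: less_imp_le)
    ultimately show ?thesis using usum by linarith
  qed
  have minle: "Min ((\<lambda>j. u j / (1 - u j)) ` {1..K}) \<le> u j / (1 - u j)" if "j \<in> {1..K}" for j
    using that by (intro Min_le) auto
  have gj: "\<gamma> > - (u j / (1 - u j))" if "j \<in> {1..K}" for j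
    using minle[OF that] gmin by linarith
  have diagpos: "\<forall>j\<in>{1..K}. \<gamma> + (1-\<gamma>) * u j > 0"
  proof
    fix j assume j: "j \<in> {1..K}"
    have p: "1 - u j > 0" using ult1[OF j] by simp
    have "\<gamma> * (1 - u j) > - (u j / (1 - u j)) * (1 - u j)"
      using gj[OF j] p by (intro mult_strict_right_mono) auto
    also have "- (u j / (1 - u j)) * (1 - u j) = - u j" using p by simp
    finally show "\<gamma> + (1-\<gamma>) * u j > 0" by (simp add: algebra_simps)
  qed
  have gm1: "\<gamma> > -1"
  proof -
    obtain j where j: "j \<in> {1..K}" "u j \<le> 1/2"
    proof (cases "u 1 \<le> 1/2")
      case True then show ?thesis using that[of 1] K2 by auto
    next
      case False
      have "(\<Sum>a\<in>{1..K}. u a) \<ge> (\<Sum>a\<in>{1,2}. u a)"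
        using K2 upos by (intro sum_mono2) (auto intro: less_imp_le)
      then have "u 2 \<le> 1/2" using False usum by simp
      then show ?thesis using that[of 2] K2 by auto
    qed
    have p: "1 - u j > 0" using ult1[OF j(1)] by simp
    have "u j / (1 - u j) \<le> 1" using p j by (simp add: field_simps)
    then show ?thesis using gj[OF j(1)] by linarith
  qed
  interpret mc K u \<gamma>
    using K2 upos usum g1 gm1 diagpos by unfold_locales auto
  define h where "h n = real n ^ 4 / (real (m n) + 1)" for n
  have ev1: "eventually (\<lambda>n. real n ^ 4 \<le> real (m n)) sequentially"
    using landau_o.smallD[OF assms(6), of 1] by simp
  have ev2: "eventually (\<lambda>n. n \<ge> 1) sequentially" by (rule eventually_ge_at_top)
  have lim0: "(\<lambda>n. real n ^ 4 / real (m n)) \<longlonglongrightarrow> 0"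
    using smalloD_tendsto[OF assms(6)] .
  have hlim: "h \<longlonglongrightarrow> 0"
  proof (rule tendsto_sandwich[OF _ _ tendsto_const lim0])
    show "eventually (\<lambda>n. 0 \<le> h n) sequentially" by (auto simp: h_def)
    show "eventually (\<lambda>n. h n \<le> real n ^ 4 / real (m n)) sequentially"
      using ev1 ev2
    proof eventually_elim
      case (elim n)
      have "(1::real) \<le> real n ^ 4" using elim(2) by (intro one_le_power) simp
      then have "real (m n) \<ge> 1" using elim(1) by linarith
      then show ?case unfolding h_def by (intro divide_left_mono) auto
    qed
  qed
  have blim: "(\<lambda>n. sqrt (2 / cst * h n)) \<longlonglongrightarrow> 0"
    using tendsto_real_sqrt[OF tendsto_mult_right_zero[OF hlim, of "2 / cst"]] by simp
  show ?thesis
  proof (rule tendsto_sandwich[OF _ _ tendsto_const blim])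
    show "eventually (\<lambda>n. 0 \<le> collision_prob K \<gamma> u (m n) n) sequentially"
      using ev2 by eventually_elim (rule coll_nonneg)
    show "eventually (\<lambda>n. collision_prob K \<gamma> u (m n) n \<le> sqrt (2 / cst * h n)) sequentially"
      using ev2
    proof eventually_elim
      case (elim n)
      have "sqrt (2 / cst * h n) = sqrt ((real n ^ 2)^2 * (2 / ((real (m n) + 1) * cst)))"
        unfolding h_def by (simp add: field_simps power_mult[symmetric])
      also have "\<dots> = sqrt ((real n ^ 2)^2) * sqrt (2 / ((real (m n) + 1) * cst))"
        by (rule real_sqrt_mult)
      also have "sqrt ((real n ^ 2)^2) = real n ^ 2" by (rule real_sqrt_unique) simp_all
      finally show ?case using coll_bound[OF elim] by simp
    qed
  qed
qed


end
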